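(* Let $X$ be a real random variable with $E(X^2)<\infty$ and distribution function $F$, and let $Y$ be a self-decomposable real random variable with $E(Y^2)<\infty$ and distribution function $G$, independent of $X$. For $\lambda\in\mathbb{R}$ let $F_\lambda$ be the distribution function of $X+\lambda Y$, and let $t_{n,\lambda}$ be the Pitman estimator of $\theta$ from a sample of size $n$ from $F_\lambda(x-\theta)$. Then $\lambda\mapsto\mathrm{var}(t_{n,\lambda})$ is increasing on $(0,\infty)$ and decreasing on $(-\infty,0)$.
   Context: A random variable $Y$ is self-decomposable if for every $c\in(0,1)$ there is a random variable $Z_c$ independent of $Y$ such that $Y$ has the same distribution as $cY+Z_c$. A sample of size $n$ from $H(x-\theta)$ ($\theta\in\mathbb{R}$ unknown) is $x_1,\ldots,x_n$ i.i.d. with $x_i-\theta\sim H$. An estimator $t$ is equivariant if $t(x_1+c,\ldots,x_n+c)=t(x_1,\ldots,x_n)+c$ for all $c$. The Pitman estimator is the equivariant estimator of minimal variance; it equals $\bar x-E_0(\bar x\mid x_1-\bar x,\ldots,x_n-\bar x)$, with $E_0$ expectation under $\theta=0$. *)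

theory Defs
  imports "HOL-Probability.Probability"
begin

text \<open>Self-decomposability of a distribution G on the reals: for every c in (0,1)
  there is a probability distribution Q (the law of Z_c, independent of Y) such that
  the law of Y equals the law of c*Y + Z_c, i.e. the convolution of the law of c*Y with Q.\<close>
definition self_decomposable :: "real measure \<Rightarrow> bool" where
  "self_decomposable G \<longleftrightarrow>
     (\<forall>c\<in>{0<..<1}. \<exists>Q. prob_space Q \<and> sets Q = sets borel \<and>
        G = (distr G borel (\<lambda>y. c * y) \<star> Q))"

definition sample_mean :: "nat \<Rightarrow> (nat \<Rightarrow> real) \<Rightarrow> real" where
  "sample_mean n x = (\<Sum>i<n. x i) / real n"

definition residuals :: "nat \<Rightarrow> (nat \<Rightarrow> real) \<Rightarrow> (nat \<Rightarrow> real)" where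
  "residuals n x = (\<lambda>i\<in>{..<n}. x i - sample_mean n x)"

text \<open>Law of a sample x_1..x_n of size n under theta = 0 (i.i.d. with law H).\<close>
definition sample_law :: "real measure \<Rightarrow> nat \<Rightarrow> (nat \<Rightarrow> real) measure" where
  "sample_law H n = PiM {..<n} (\<lambda>_. H)"

definition residual_algebra :: "real measure \<Rightarrow> nat \<Rightarrow> (nat \<Rightarrow> real) measure" where
  "residual_algebra H n =
     vimage_algebra (space (sample_law H n)) (residuals n) (PiM {..<n} (\<lambda>_. borel))"

definition pitman_estimator :: "real measure \<Rightarrow> nat \<Rightarrow> (nat \<Rightarrow> real) \<Rightarrow> real" where
  "pitman_estimator H n x =
     sample_mean n x - real_cond_exp (sample_law H n) (residual_algebra H n) (sample_mean n) x"

text \<open>Variance of the Pitman estimator (it does not depend on theta by equivariance;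
  computed under theta = 0).\<close>
definition pitman_var :: "real measure \<Rightarrow> nat \<Rightarrow> real" where
  "pitman_var H n =
     (let M = sample_law H n; t = pitman_estimator H n
      in (\<integral>x. (t x - (\<integral>y. t y \<partial>M))\<^sup>2 \<partial>M))"

end

theory Submission imports Defs begin

lemma sq_int_mult:
  fixes a b :: "'a \<Rightarrow> real"
  assumes [measurable]: "a \<in> borel_measurable M" "b \<in> borel_measurable M"
    and ia: "integrable M (\<lambda>x. (a x)\<^sup>2)" and ib: "integrable M (\<lambda>x. (b x)\<^sup>2)"
  shows "integrable M (\<lambda>x. a x * b x)"
proof (rule Bochner_Integration.integrable_bound[of _ "\<lambda>x. (a x)\<^sup>2 + (b x)\<^sup>2"])
  show "integrable M (\<lambda>x. (a x)\<^sup>2 + (b x)\<^sup>2)" using ia ib by simp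
  show "AE x in M. norm (a x * b x) \<le> norm ((a x)\<^sup>2 + (b x)\<^sup>2)"
  proof (rule AE_I2)
    fix x
    have "2 * \<bar>a x * b x\<bar> \<le> (a x)\<^sup>2 + (b x)\<^sup>2"
    proof -
      have "0 \<le> (\<bar>a x\<bar> - \<bar>b x\<bar>)\<^sup>2" by simp
      then show ?thesis by (simp add: power2_diff abs_mult)
    qed
    then show "norm (a x * b x) \<le> norm ((a x)\<^sup>2 + (b x)\<^sup>2)" by simp
  qed
qed simp

lemma sq_int_add:
  fixes a b :: "'a \<Rightarrow> real"
  assumes [measurable]: "a \<in> borel_measurable M" "b \<in> borel_measurable M"
    and ia: "integrable M (\<lambda>x. (a x)\<^sup>2)" and ib: "integrable M (\<lambda>x. (b x)\<^sup>2)"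
  shows "integrable M (\<lambda>x. (a x + b x)\<^sup>2)" "integrable M (\<lambda>x. (a x - b x)\<^sup>2)"
proof -
  have m: "integrable M (\<lambda>x. a x * b x)" by (rule sq_int_mult) (use assms in auto)
  have "integrable M (\<lambda>x. (a x)\<^sup>2 + (b x)\<^sup>2 + 2 * (a x * b x))" using ia ib m by simp
  then show "integrable M (\<lambda>x. (a x + b x)\<^sup>2)" by (simp add: power2_sum mult.assoc)
  have "integrable M (\<lambda>x. (a x)\<^sup>2 + (b x)\<^sup>2 - 2 * (a x * b x))" using ia ib m by simp
  then show "integrable M (\<lambda>x. (a x - b x)\<^sup>2)" by (simp add: power2_diff mult.assoc)
qed

lemma proj_ineq:
  assumes P: "prob_space M" and sub: "subalgebra M F"
   and [measurable]: "f \<in> borel_measurable M" and f2: "integrable M (\<lambda>x. (f x)\<^sup>2)"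
   and [measurable]: "h \<in> borel_measurable F"
  shows "(\<integral>\<^sup>+x. ennreal ((f x - real_cond_exp M F f x)\<^sup>2) \<partial>M) \<le> (\<integral>\<^sup>+x. ennreal ((f x - h x)\<^sup>2) \<partial>M)"
proof -
  interpret prob_space M by fact
  interpret finite_measure_subalgebra M F by standard (fact sub)
  define c where "c = real_cond_exp M F f"
  have fi: "integrable M f" by (rule square_integrable_imp_integrable) (use f2 in auto)
  have cF[measurable]: "c \<in> borel_measurable F" unfolding c_def by simp
  have hM[measurable]: "h \<in> borel_measurable M" by (rule measurable_from_subalg[OF subalg]) simp
  have cM[measurable]: "c \<in> borel_measurable M" by (rule measurable_from_subalg[OF subalg]) simp
  have c2: "integrable M (\<lambda>x. (c x)\<^sup>2)" unfolding c_def
    by (rule integrable_convex_cond_exp[where I=UNIV]) (use fi f2 convex_power2 in auto)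
  show ?thesis
  proof (cases "(\<integral>\<^sup>+x. ennreal ((f x - h x)\<^sup>2) \<partial>M) = \<infinity>")
    case True then show ?thesis by simp
  next
    case False
    then obtain r where r: "(\<integral>\<^sup>+x. ennreal ((f x - h x)\<^sup>2) \<partial>M) = ennreal r"
      using False by (cases "(\<integral>\<^sup>+x. ennreal ((f x - h x)\<^sup>2) \<partial>M)" rule: ennreal_cases) auto
    have fh2: "integrable M (\<lambda>x. (f x - h x)\<^sup>2)"
      by (rule integrableI_nn_integral_finite[OF _ _ r]) auto
    define u where "u x = f x - c x" for x
    define d where "d x = c x - h x" for x
    have [measurable]: "u \<in> borel_measurable M" "d \<in> borel_measurable M"
      "d \<in> borel_measurable F" unfolding u_def d_def by auto
    have u2: "integrable M (\<lambda>x. (u x)\<^sup>2)" unfolding u_def by (rule sq_int_add) (use f2 c2 in auto)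
    have "integrable M (\<lambda>x. ((f x - h x) - u x)\<^sup>2)" by (rule sq_int_add) (use fh2 u2 in auto)
    moreover have "\<And>x. (f x - h x) - u x = d x" unfolding u_def d_def by simp
    ultimately have d2: "integrable M (\<lambda>x. (d x)\<^sup>2)" by simp
    have ud: "integrable M (\<lambda>x. u x * d x)" by (rule sq_int_mult) (use u2 d2 in auto)
    have df: "integrable M (\<lambda>x. d x * f x)" by (rule sq_int_mult) (use d2 f2 in auto)
    have dc: "integrable M (\<lambda>x. d x * c x)" by (rule sq_int_mult) (use d2 c2 in auto)
    have eq1: "(\<integral>x. d x * c x \<partial>M) = (\<integral>x. d x * f x \<partial>M)"
      unfolding c_def by (rule real_cond_exp_intg(2)) (use df in auto)
    have "(\<integral>x. u x * d x \<partial>M) = (\<integral>x. d x * f x - d x * c x \<partial>M)"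
      by (rule Bochner_Integration.integral_cong) (auto simp: u_def algebra_simps)
    also have "\<dots> = 0" using eq1 df dc by simp
    finally have ud0: "(\<integral>x. u x * d x \<partial>M) = 0" .
    have "(\<integral>x. (f x - h x)\<^sup>2 \<partial>M) = (\<integral>x. (u x)\<^sup>2 + 2 * (u x * d x) + (d x)\<^sup>2 \<partial>M)"
      by (rule Bochner_Integration.integral_cong) (auto simp: u_def d_def power2_eq_square algebra_simps)
    also have "\<dots> = (\<integral>x. (u x)\<^sup>2 \<partial>M) + 2 * (\<integral>x. u x * d x \<partial>M) + (\<integral>x. (d x)\<^sup>2 \<partial>M)"
      using u2 ud d2 by simp
    also have "\<dots> \<ge> (\<integral>x. (u x)\<^sup>2 \<partial>M)" using ud0 by simp
    finally have le: "(\<integral>x. (u x)\<^sup>2 \<partial>M) \<le> (\<integral>x. (f x - h x)\<^sup>2 \<partial>M)" .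
    have "(\<integral>\<^sup>+x. ennreal ((f x - c x)\<^sup>2) \<partial>M) = ennreal (\<integral>x. (u x)\<^sup>2 \<partial>M)"
      unfolding u_def by (rule nn_integral_eq_integral) (use u2 in \<open>auto simp: u_def\<close>)
    also have "\<dots> \<le> ennreal (\<integral>x. (f x - h x)\<^sup>2 \<partial>M)" using le by simp
    also have "\<dots> = (\<integral>\<^sup>+x. ennreal ((f x - h x)\<^sup>2) \<partial>M)"
      by (rule nn_integral_eq_integral[symmetric]) (use fh2 in auto)
    finally show ?thesis unfolding c_def .
  qed
qed


lemma sample_mean_meas[measurable]:
  "sample_mean n \<in> borel_measurable (PiM {..<n} (\<lambda>_. borel))"
  unfolding sample_mean_def by measurable

lemma residuals_meas[measurable]:
  "residuals n \<in> PiM {..<n} (\<lambda>_. borel) \<rightarrow>\<^sub>M PiM {..<n} (\<lambda>_. borel)"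
  unfolding residuals_def by measurable

lemma sets_sample_law:
  assumes "sets H = sets borel"
  shows "sets (sample_law H n) = sets (PiM {..<n} (\<lambda>_. borel))"
  unfolding sample_law_def by (rule sets_PiM_cong) (use assms in auto)

lemma space_sample_law:
  assumes "sets H = sets borel"
  shows "space (sample_law H n) = PiE {..<n} (\<lambda>_. UNIV)"
  using sets_eq_imp_space_eq[OF sets_sample_law[OF assms]] by (simp add: space_PiM)

lemma prob_sample_law:
  assumes "prob_space H"
  shows "prob_space (sample_law H n)"
  unfolding sample_law_def by (rule prob_space_PiM) (use assms in auto)

lemma subalg_residual:
  assumes "sets H = sets borel"
  shows "subalgebra (sample_law H n) (residual_algebra H n)"
proof -
  have m: "residuals n \<in> sample_law H n \<rightarrow>\<^sub>M PiM {..<n} (\<lambda>_. borel)"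
    using residuals_meas measurable_cong_sets[OF sets_sample_law[OF assms] refl] by blast
  show ?thesis unfolding subalgebra_def residual_algebra_def
  proof
    show "sets (vimage_algebra (space (sample_law H n)) (residuals n) (Pi\<^sub>M {..<n} (\<lambda>_. borel))) \<subseteq> sets (sample_law H n)"
      using m measurable_space[OF m] by (subst sets_vimage_algebra2) (auto simp: measurable_sets)
  qed simp
qed

lemma sq_int_sum:
  fixes f :: "'i \<Rightarrow> 'a \<Rightarrow> real"
  assumes "finite S" "\<And>i. i \<in> S \<Longrightarrow> f i \<in> borel_measurable M"
    "\<And>i. i \<in> S \<Longrightarrow> integrable M (\<lambda>x. (f i x)\<^sup>2)"
  shows "integrable M (\<lambda>x. (\<Sum>i\<in>S. f i x)\<^sup>2)"
  using assms
proof (induction S rule: finite_induct)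
  case (insert j S)
  have mj: "f j \<in> borel_measurable M" "integrable M (\<lambda>x. (f j x)\<^sup>2)" using insert.prems by auto
  have ms: "(\<lambda>x. \<Sum>i\<in>S. f i x) \<in> borel_measurable M"
    by (rule borel_measurable_sum) (use insert.prems in auto)
  have "integrable M (\<lambda>x. (\<Sum>i\<in>S. f i x)\<^sup>2)" using insert by auto
  then have "integrable M (\<lambda>x. (f j x + (\<Sum>i\<in>S. f i x))\<^sup>2)"
    using sq_int_add(1)[OF mj(1) ms mj(2)] by blast
  then show ?case using insert by simp
qed simp

lemma sq_int_mean:
  assumes "prob_space H" "sets H = sets borel" "integrable H (\<lambda>x. x\<^sup>2)"
  shows "integrable (sample_law H n) (\<lambda>x. (sample_mean n x)\<^sup>2)"
proof -
  have comp: "integrable (sample_law H n) (\<lambda>x. (x i)\<^sup>2)" if i: "i < n" for i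
  proof -
    have "distr (sample_law H n) H (\<lambda>\<omega>. \<omega> i) = H"
      unfolding sample_law_def by (rule distr_PiM_component) (use assms i in auto)
    then have i1: "integrable (distr (sample_law H n) H (\<lambda>\<omega>. \<omega> i)) (\<lambda>x. x\<^sup>2)" using assms(3) by simp
    have m1: "(\<lambda>\<omega>. \<omega> i) \<in> sample_law H n \<rightarrow>\<^sub>M H" unfolding sample_law_def
      using i by (intro measurable_component_singleton) auto
    have m2: "(\<lambda>x. x\<^sup>2) \<in> borel_measurable H" unfolding measurable_cong_sets[OF assms(2) refl] by simp
    show ?thesis using integrable_distr_eq[OF m1 m2] i1 by simp
  qed
  have ms: "(\<lambda>x. x i) \<in> borel_measurable (sample_law H n)" if "i < n" for i
    unfolding measurable_cong_sets[OF sets_sample_law[OF assms(2)] refl]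
    using that by (intro measurable_component_singleton) auto
  have "integrable (sample_law H n) (\<lambda>x. (\<Sum>i<n. x i)\<^sup>2)"
    by (rule sq_int_sum) (use comp ms in simp_all)
  then have "integrable (sample_law H n) (\<lambda>x. (\<Sum>i<n. x i)\<^sup>2 / (real n)\<^sup>2)"
    by (rule integrable_divide_zero)
  then show ?thesis unfolding sample_mean_def power_divide .
qed


lemma pitman_var_nn:
  assumes H: "prob_space H" "sets H = sets borel" "integrable H (\<lambda>x. x\<^sup>2)"
  shows "ennreal (pitman_var H n) = (\<integral>\<^sup>+x. ennreal ((sample_mean n x -
     real_cond_exp (sample_law H n) (residual_algebra H n) (sample_mean n) x)\<^sup>2) \<partial>sample_law H n)"
proof -
  define P where "P = sample_law H n"
  define F where "F = residual_algebra H n"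
  define c where "c = real_cond_exp P F (sample_mean n)"
  interpret prob_space P unfolding P_def by (rule prob_sample_law) fact
  interpret finite_measure_subalgebra P F
    by standard (unfold P_def F_def, rule subalg_residual, fact)
  have fm[measurable]: "sample_mean n \<in> borel_measurable P"
    unfolding P_def measurable_cong_sets[OF sets_sample_law[OF H(2)] refl] by simp
  have f2: "integrable P (\<lambda>x. (sample_mean n x)\<^sup>2)" unfolding P_def by (rule sq_int_mean) fact+
  have fi: "integrable P (sample_mean n)" by (rule square_integrable_imp_integrable) (use f2 in auto)
  have cM[measurable]: "c \<in> borel_measurable P" unfolding c_def
    by (rule measurable_from_subalg[OF subalg]) simp
  have c2: "integrable P (\<lambda>x. (c x)\<^sup>2)" unfolding c_def
    by (rule integrable_convex_cond_exp[where I=UNIV]) (use fi f2 convex_power2 in auto)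
  have ci: "integrable P c" "(\<integral>x. c x \<partial>P) = (\<integral>x. sample_mean n x \<partial>P)"
    unfolding c_def using real_cond_exp_int[OF fi] by auto
  have d2: "integrable P (\<lambda>x. (sample_mean n x - c x)\<^sup>2)" by (rule sq_int_add) (use f2 c2 in auto)
  have t0: "(\<integral>y. sample_mean n y - c y \<partial>P) = 0" using fi ci by simp
  have "pitman_var H n = (\<integral>x. (sample_mean n x - c x)\<^sup>2 \<partial>P)"
    unfolding pitman_var_def Let_def pitman_estimator_def c_def P_def[symmetric] F_def[symmetric]
    using t0[unfolded c_def] by simp
  also have "ennreal \<dots> = (\<integral>\<^sup>+x. ennreal ((sample_mean n x - c x)\<^sup>2) \<partial>P)"
    by (rule nn_integral_eq_integral[symmetric]) (use d2 in auto)
  finally show ?thesis unfolding P_def c_def F_def .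
qed

definition vadd :: "nat \<Rightarrow> (nat \<Rightarrow> real) \<Rightarrow> (nat \<Rightarrow> real) \<Rightarrow> (nat \<Rightarrow> real)" where
  "vadd n x w = (\<lambda>i\<in>{..<n}. x i + w i)"

lemma vadd_meas[measurable]:
  "(\<lambda>p. vadd n (fst p) (snd p)) \<in> (PiM {..<n} (\<lambda>_. borel) \<Otimes>\<^sub>M PiM {..<n} (\<lambda>_. borel)) \<rightarrow>\<^sub>M PiM {..<n} (\<lambda>_. borel)"
  unfolding vadd_def by measurable
lemma sample_law_conv:
  assumes H: "prob_space H" and sH[measurable_cong]: "sets H = sets borel"
    and Q: "prob_space Q" and sQ[measurable_cong]: "sets Q = sets borel"
  shows "sample_law (H \<star> Q) n =
    distr (sample_law H n \<Otimes>\<^sub>M sample_law Q n) (PiM {..<n} (\<lambda>_. borel)) (\<lambda>p. vadd n (fst p) (snd p))"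
proof -
  let ?I = "{..<n}"
  let ?P = "PiM ?I (\<lambda>_. H)" and ?W = "PiM ?I (\<lambda>_. Q)"
  let ?add = "\<lambda>p. vadd n (fst p) (snd p)"
  interpret SH: product_sigma_finite "\<lambda>_. H" by (simp add: product_sigma_finite_def prob_space_imp_sigma_finite[OF H])
  interpret SQ: product_sigma_finite "\<lambda>_. Q" by (simp add: product_sigma_finite_def prob_space_imp_sigma_finite[OF Q])
  have fHQ: "finite_measure (H \<star> Q)"
    by (rule convolution_finite) (use H Q sH sQ in \<open>auto intro: prob_space.finite_measure\<close>)
  interpret SB: product_sigma_finite "\<lambda>_. H \<star> Q"
    by (simp add: product_sigma_finite_def finite_measure.sigma_finite_measure[OF fHQ])
  interpret W: prob_space ?W by (rule prob_space_PiM) (use Q in auto)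
  have sP: "sets ?P = sets (PiM ?I (\<lambda>_. borel))" by (rule sets_PiM_cong) (auto simp: sH sQ)
  have sW: "sets ?W = sets (PiM ?I (\<lambda>_. borel))" by (rule sets_PiM_cong) (auto simp: sH sQ)
  have spP: "space ?P = PiE ?I (\<lambda>_. UNIV)" "space ?W = PiE ?I (\<lambda>_. UNIV)"
    using sets_eq_imp_space_eq[OF sP] sets_eq_imp_space_eq[OF sW] by (auto simp: space_PiM)
  have sPW: "sets (?P \<Otimes>\<^sub>M ?W) = sets (PiM ?I (\<lambda>_. borel) \<Otimes>\<^sub>M PiM ?I (\<lambda>_. borel))"
    by (rule sets_pair_measure_cong[OF sP sW])
  have addm: "?add \<in> (?P \<Otimes>\<^sub>M ?W) \<rightarrow>\<^sub>M PiM ?I (\<lambda>_. borel)"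
    unfolding measurable_cong_sets[OF sPW refl] by (rule vadd_meas)
  have "distr (?P \<Otimes>\<^sub>M ?W) (PiM ?I (\<lambda>_. borel)) ?add = PiM ?I (\<lambda>_. H \<star> Q)"
  proof (rule SB.PiM_eqI)
    show "sets (distr (?P \<Otimes>\<^sub>M ?W) (PiM ?I (\<lambda>_. borel)) ?add) = sets (PiM ?I (\<lambda>_. H \<star> Q))"
      unfolding sets_distr by (rule sets_PiM_cong) simp_all
    fix A assume A: "\<And>i. i \<in> ?I \<Longrightarrow> A i \<in> sets (H \<star> Q)"
    then have A'[measurable]: "\<And>i. i \<in> ?I \<Longrightarrow> A i \<in> sets borel" by simp
    have Ain: "Pi\<^sub>E ?I A \<in> sets (PiM ?I (\<lambda>_. borel))" by (rule sets_PiM_I_finite) (use A' in auto)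
    define S where "S = ?add -` Pi\<^sub>E ?I A \<inter> space (?P \<Otimes>\<^sub>M ?W)"
    have Sm: "S \<in> sets (?P \<Otimes>\<^sub>M ?W)" unfolding S_def using addm Ain by (rule measurable_sets)
    define g where "g i y = (\<integral>\<^sup>+s. indicator (A i) (y + s) \<partial>Q)" for i y
    have gm: "g i \<in> borel_measurable H" if i: "i \<in> ?I" for i
    proof -
      show ?thesis unfolding g_def
        by (rule sigma_finite_measure.borel_measurable_nn_integral[OF prob_space_imp_sigma_finite[OF Q]])
           (use i in measurable)
    qed
    have sec: "emeasure ?W (Pair x -` S) = (\<Prod>i\<in>?I. g i (x i))" if x: "x \<in> space ?P" for x
    proof -
      have "Pair x -` S = Pi\<^sub>E ?I (\<lambda>i. {s. x i + s \<in> A i})"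
        using x unfolding S_def vadd_def by (auto simp: space_pair_measure spP PiE_iff extensional_def)
      moreover have "{s. x i + s \<in> A i} \<in> sets Q" if "i \<in> ?I" for i
      proof -
        have "(\<lambda>s. x i + s) -` A i \<inter> space borel \<in> sets borel"
          by (rule measurable_sets[OF _ A'[OF that]]) simp
        then show ?thesis by (simp add: vimage_def)
      qed
      moreover have "emeasure Q {s. x i + s \<in> A i} = g i (x i)" if "i \<in> ?I" for i
      proof -
        have "emeasure Q {s. x i + s \<in> A i} = (\<integral>\<^sup>+s. indicator {s. x i + s \<in> A i} s \<partial>Q)"
          using \<open>i \<in> ?I \<Longrightarrow> {s. x i + s \<in> A i} \<in> sets Q\<close> that by simp
        also have "\<dots> = g i (x i)" unfolding g_def by (rule nn_integral_cong) (simp add: indicator_def)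
        finally show ?thesis .
      qed
      ultimately show ?thesis by (simp add: SQ.emeasure_PiM)
    qed
    have "emeasure (distr (?P \<Otimes>\<^sub>M ?W) (PiM ?I (\<lambda>_. borel)) ?add) (Pi\<^sub>E ?I A) = emeasure (?P \<Otimes>\<^sub>M ?W) S"
      unfolding S_def by (rule emeasure_distr[OF addm Ain])
    also have "\<dots> = (\<integral>\<^sup>+x. emeasure ?W (Pair x -` S) \<partial>?P)"
      by (rule W.emeasure_pair_measure_alt[OF Sm])
    also have "\<dots> = (\<integral>\<^sup>+x. (\<Prod>i\<in>?I. g i (x i)) \<partial>?P)"
      by (rule nn_integral_cong) (simp add: sec)
    also have "\<dots> = (\<Prod>i\<in>?I. integral\<^sup>N H (g i))"
      by (rule SH.product_nn_integral_prod) (use gm in auto)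
    also have "\<dots> = (\<Prod>i\<in>?I. emeasure (H \<star> Q) (A i))"
    proof (rule prod.cong[OF refl])
      fix i assume i: "i \<in> ?I"
      show "integral\<^sup>N H (g i) = emeasure (H \<star> Q) (A i)" unfolding g_def
        by (rule convolution_emeasure'[symmetric]) (use A'[OF i] H Q sH sQ in \<open>auto intro: prob_space.finite_measure\<close>)
    qed
    finally show "emeasure (distr (?P \<Otimes>\<^sub>M ?W) (PiM ?I (\<lambda>_. borel)) ?add) (Pi\<^sub>E ?I A) = (\<Prod>i\<in>?I. emeasure (H \<star> Q) (A i))" .
  qed simp
  then show ?thesis unfolding sample_law_def by simp
qed


lemma mean_vadd: "sample_mean n (vadd n x w) = sample_mean n x + sample_mean n w"
  unfolding sample_mean_def vadd_def by (simp add: sum.distrib add_divide_distrib)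

lemma res_vadd: "residuals n (vadd n x w) = vadd n (residuals n x) (residuals n w)"
  unfolding residuals_def mean_vadd by (rule ext) (simp add: vadd_def)

lemma vadd_meas2[measurable]: "(\<lambda>z. vadd n z r) \<in> PiM {..<n} (\<lambda>_. borel) \<rightarrow>\<^sub>M PiM {..<n} (\<lambda>_. borel)"
  unfolding vadd_def by measurable

lemma pitman_var_nonneg: "0 \<le> pitman_var H n"
  unfolding pitman_var_def Let_def by (rule integral_nonneg_AE) simp

lemma pitman_conv_le:
  assumes H: "prob_space H" and sH: "sets H = sets borel" and H2: "integrable H (\<lambda>x. x\<^sup>2)"
    and Q: "prob_space Q" and sQ: "sets Q = sets borel" and B2: "integrable (H \<star> Q) (\<lambda>x. x\<^sup>2)"
  shows "pitman_var H n \<le> pitman_var (H \<star> Q) n"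
proof -
  define B where "B = (H \<star> Q)"
  have sB: "sets B = sets borel" unfolding B_def by simp
  interpret HQ: pair_prob_space H Q
    by (simp add: pair_prob_space_def pair_sigma_finite_def H Q prob_space_imp_sigma_finite)
  have pB: "prob_space B" unfolding B_def convolution_def
    by (rule HQ.P.prob_space_distr)
       (unfold measurable_cong_sets[OF sets_pair_measure_cong[OF sH sQ] refl], measurable)
  define P where "P = sample_law H n"
  define W where "W = sample_law Q n"
  define PB where "PB = sample_law B n"
  define F where "F = residual_algebra H n"
  define FB where "FB = residual_algebra B n"
  define c where "c = real_cond_exp P F (sample_mean n)"
  define cb where "cb = real_cond_exp PB FB (sample_mean n)"
  let ?I = "{..<n}"
  let ?add = "\<lambda>p. vadd n (fst p) (snd p)"
  have sP: "sets P = sets (PiM ?I (\<lambda>_. borel))" unfolding P_def by (rule sets_sample_law[OF sH])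
  have sW: "sets W = sets (PiM ?I (\<lambda>_. borel))" unfolding W_def by (rule sets_sample_law[OF sQ])
  have sPB: "sets PB = sets (PiM ?I (\<lambda>_. borel))" unfolding PB_def by (rule sets_sample_law[OF sB])
  have spP: "space P = PiE ?I (\<lambda>_. UNIV)" unfolding P_def by (rule space_sample_law[OF sH])
  have spW: "space W = PiE ?I (\<lambda>_. UNIV)" unfolding W_def by (rule space_sample_law[OF sQ])
  have spPB: "space PB = PiE ?I (\<lambda>_. UNIV)" unfolding PB_def by (rule space_sample_law[OF sB])
  interpret W: prob_space W unfolding W_def by (rule prob_sample_law[OF Q])
  interpret PW: pair_sigma_finite P W
    unfolding P_def W_def
    by (simp add: pair_sigma_finite_def prob_space_imp_sigma_finite prob_sample_law H Q)
  have cbF: "cb \<in> borel_measurable FB"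
  proof -
    interpret prob_space PB unfolding PB_def by (rule prob_sample_law[OF pB])
    interpret finite_measure_subalgebra PB FB
      by standard (unfold PB_def FB_def, rule subalg_residual, fact sB)
    show ?thesis unfolding cb_def by simp
  qed
  have subB: "subalgebra PB FB" unfolding PB_def FB_def by (rule subalg_residual[OF sB])
  have cbM: "cb \<in> borel_measurable (PiM ?I (\<lambda>_. borel))"
    using measurable_from_subalg[OF subB cbF] unfolding measurable_cong_sets[OF sPB refl] .
  define \<phi> where "\<phi> y = ennreal ((sample_mean n y - cb y)\<^sup>2)" for y
  have \<phi>m: "\<phi> \<in> borel_measurable (PiM ?I (\<lambda>_. borel))" unfolding \<phi>_def using cbM by measurable
  have addm: "?add \<in> (P \<Otimes>\<^sub>M W) \<rightarrow>\<^sub>M PiM ?I (\<lambda>_. borel)"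
    unfolding measurable_cong_sets[OF sets_pair_measure_cong[OF sP sW] refl] by (rule vadd_meas)
  have \<phi>am: "(\<lambda>p. \<phi> (?add p)) \<in> borel_measurable (P \<Otimes>\<^sub>M W)"
    by (rule measurable_comp[OF addm \<phi>m, unfolded comp_def])
  have VH: "ennreal (pitman_var H n) = (\<integral>\<^sup>+x. ennreal ((sample_mean n x - c x)\<^sup>2) \<partial>P)"
    unfolding P_def c_def F_def by (rule pitman_var_nn[OF H sH H2])
  have inner: "ennreal (pitman_var H n) \<le> (\<integral>\<^sup>+x. \<phi> (vadd n x w) \<partial>P)" if w: "w \<in> space W" for w
  proof -
    define h where "h x = cb (vadd n x w) - sample_mean n w" for x
    have g1: "(\<lambda>x. vadd n x w) \<in> space F \<rightarrow> space PB"
      unfolding spPB by (auto simp: vadd_def)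
    have rm: "residuals n \<in> F \<rightarrow>\<^sub>M PiM ?I (\<lambda>_. borel)"
      unfolding F_def residual_algebra_def
      by (rule measurable_vimage_algebra1) (auto simp: space_PiM residuals_def)
    have g2: "(\<lambda>x. residuals n (vadd n x w)) \<in> F \<rightarrow>\<^sub>M PiM ?I (\<lambda>_. borel)"
      unfolding res_vadd by (rule measurable_comp[OF rm vadd_meas2, unfolded comp_def])
    have vm: "(\<lambda>x. vadd n x w) \<in> F \<rightarrow>\<^sub>M FB"
      unfolding FB_def residual_algebra_def PB_def[symmetric]
      by (rule measurable_vimage_algebra2[where f="residuals n", OF g1 g2])
    have hF: "h \<in> borel_measurable F"
      unfolding h_def using measurable_comp[OF vm cbF, unfolded comp_def] by simp
    have fm: "sample_mean n \<in> borel_measurable P"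
      unfolding measurable_cong_sets[OF sP refl] by simp
    have "ennreal (pitman_var H n) \<le> (\<integral>\<^sup>+x. ennreal ((sample_mean n x - h x)\<^sup>2) \<partial>P)"
      unfolding VH c_def
      by (rule proj_ineq[OF _ _ fm _ hF])
         (use prob_sample_law[OF H] subalg_residual[OF sH] sq_int_mean[OF H sH H2] in
          \<open>simp_all add: P_def F_def\<close>)
    also have "\<dots> = (\<integral>\<^sup>+x. \<phi> (vadd n x w) \<partial>P)"
      by (rule nn_integral_cong) (simp add: \<phi>_def h_def mean_vadd algebra_simps)
    finally show ?thesis .
  qed
  have "ennreal (pitman_var B n) = (\<integral>\<^sup>+y. \<phi> y \<partial>PB)"
    unfolding \<phi>_def PB_def cb_def FB_def by (rule pitman_var_nn[OF pB sB B2[folded B_def]])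
  also have "PB = distr (P \<Otimes>\<^sub>M W) (PiM ?I (\<lambda>_. borel)) ?add"
    unfolding PB_def P_def W_def B_def by (rule sample_law_conv[OF H sH Q sQ])
  also have "(\<integral>\<^sup>+y. \<phi> y \<partial>distr (P \<Otimes>\<^sub>M W) (PiM ?I (\<lambda>_. borel)) ?add) = (\<integral>\<^sup>+p. \<phi> (?add p) \<partial>(P \<Otimes>\<^sub>M W))"
    by (rule nn_integral_distr[OF addm]) (use \<phi>m in simp)
  also have "\<dots> = (\<integral>\<^sup>+w. \<integral>\<^sup>+x. \<phi> (vadd n x w) \<partial>P \<partial>W)"
    using PW.nn_integral_snd[OF \<phi>am] by simp
  also have "\<dots> \<ge> (\<integral>\<^sup>+w. ennreal (pitman_var H n) \<partial>W)"
    by (rule nn_integral_mono) (use inner in auto)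
  also have "(\<integral>\<^sup>+w. ennreal (pitman_var H n) \<partial>W) = ennreal (pitman_var H n)"
    by (simp add: W.emeasure_space_1)
  finally have "ennreal (pitman_var H n) \<le> ennreal (pitman_var B n)" .
  then show ?thesis unfolding B_def using pitman_var_nonneg by (simp add: ennreal_le_iff)
qed


lemma conv_scale:
  fixes A B :: "real measure" and k :: real
  assumes A: "prob_space A" and sA: "sets A = sets borel"
    and B: "prob_space B" and sB: "sets B = sets borel"
  shows "distr (A \<star> B) borel (\<lambda>x. k * x) = (distr A borel (\<lambda>x. k * x) \<star> distr B borel (\<lambda>x. k * x))"
proof -
  have mA: "(\<lambda>x::real. k * x) \<in> A \<rightarrow>\<^sub>M borel" unfolding measurable_cong_sets[OF sA refl] by simp
  have mB: "(\<lambda>x::real. k * x) \<in> B \<rightarrow>\<^sub>M borel" unfolding measurable_cong_sets[OF sB refl] by simp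
  have sf: "sigma_finite_measure (distr B borel (\<lambda>x. k * x))"
    by (rule prob_space_imp_sigma_finite, rule prob_space.prob_space_distr[OF B mB])
  have sAB: "sets (A \<Otimes>\<^sub>M B) = sets (borel \<Otimes>\<^sub>M borel)" by (rule sets_pair_measure_cong[OF sA sB])
  have m1: "(\<lambda>(x::real, y). x + y) \<in> A \<Otimes>\<^sub>M B \<rightarrow>\<^sub>M borel"
    unfolding measurable_cong_sets[OF sAB refl] by measurable
  have m2: "(\<lambda>(x::real, y::real). (k * x, k * y)) \<in> A \<Otimes>\<^sub>M B \<rightarrow>\<^sub>M borel \<Otimes>\<^sub>M borel"
    unfolding measurable_cong_sets[OF sAB refl] by measurable
  have "distr (A \<star> B) borel (\<lambda>x. k * x) = distr (A \<Otimes>\<^sub>M B) borel ((\<lambda>x. k * x) \<circ> (\<lambda>(x, y). x + y))"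
    unfolding convolution_def by (rule distr_distr[OF _ m1]) simp
  also have "\<dots> = distr (A \<Otimes>\<^sub>M B) borel ((\<lambda>(x, y). x + y) \<circ> (\<lambda>(x, y). (k * x, k * y)))"
    by (rule distr_cong) (auto simp: algebra_simps)
  also have "\<dots> = distr (distr (A \<Otimes>\<^sub>M B) (borel \<Otimes>\<^sub>M borel) (\<lambda>(x, y). (k * x, k * y))) borel (\<lambda>(x, y). x + y)"
    by (rule distr_distr[symmetric, OF _ m2]) measurable
  also have "distr (A \<Otimes>\<^sub>M B) (borel \<Otimes>\<^sub>M borel) (\<lambda>(x, y). (k * x, k * y))
      = distr A borel (\<lambda>x. k * x) \<Otimes>\<^sub>M distr B borel (\<lambda>x. k * x)"
    by (rule pair_measure_distr[OF mA mB sf, symmetric])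
  finally show ?thesis unfolding convolution_def .
qed

lemma law_decomp:
  fixes X Y :: "'a \<Rightarrow> real" and c k :: real
  assumes M: "prob_space M" and [measurable]: "X \<in> borel_measurable M" "Y \<in> borel_measurable M"
    and ind: "prob_space.indep_var M borel X borel Y"
    and Q: "prob_space Q" and sQ: "sets Q = sets borel"
    and G: "distr M borel Y = (distr (distr M borel Y) borel (\<lambda>y. c * y) \<star> Q)"
  shows "distr M borel (\<lambda>\<omega>. X \<omega> + k * Y \<omega>) =
         (distr M borel (\<lambda>\<omega>. X \<omega> + (k * c) * Y \<omega>) \<star> distr Q borel (\<lambda>x. k * x))"
proof -
  interpret prob_space M by fact
  have sumlaw: "distr M borel (\<lambda>\<omega>. X \<omega> + t * Y \<omega>) = (distr M borel X \<star> distr M borel (\<lambda>\<omega>. t * Y \<omega>))" for t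
  proof -
    have "indep_var borel (id \<circ> X) borel ((\<lambda>y. t * y) \<circ> Y)"
      by (rule indep_var_compose[OF ind])
         (simp, rule borel_measurable_continuous_onI, intro continuous_intros)
    then have i: "indep_var borel X borel (\<lambda>\<omega>. t * Y \<omega>)" by (simp add: comp_def)
    show ?thesis by (rule sum_indep_random_variable[OF i]) auto
  qed
  have scl: "distr M borel (\<lambda>\<omega>. t * Y \<omega>) = distr (distr M borel Y) borel (\<lambda>y. t * y)" for t
    by (subst distr_distr) (auto simp: comp_def)
  have pG: "prob_space (distr M borel Y)" by (rule prob_space_distr) simp
  have pGc: "prob_space (distr (distr M borel Y) borel (\<lambda>y. c * y))"
    by (rule prob_space.prob_space_distr[OF pG]) simp
  have mQ: "(\<lambda>x::real. k * x) \<in> Q \<rightarrow>\<^sub>M borel" unfolding measurable_cong_sets[OF sQ refl] by simp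
  have pQk: "prob_space (distr Q borel (\<lambda>x. k * x))" by (rule prob_space.prob_space_distr[OF Q mQ])
  have "distr M borel (\<lambda>\<omega>. k * Y \<omega>) = distr (distr (distr M borel Y) borel (\<lambda>y. c * y) \<star> Q) borel (\<lambda>y. k * y)"
    unfolding scl by (subst G) (rule refl)
  also have "\<dots> = (distr (distr (distr M borel Y) borel (\<lambda>y. c * y)) borel (\<lambda>x. k * x) \<star> distr Q borel (\<lambda>x. k * x))"
    by (rule conv_scale[OF pGc _ Q sQ]) simp
  also have "distr (distr (distr M borel Y) borel (\<lambda>y. c * y)) borel (\<lambda>x. k * x) = distr M borel (\<lambda>\<omega>. (k * c) * Y \<omega>)"
  proof -
    have m1: "(\<lambda>\<omega>. c * Y \<omega>) \<in> borel_measurable M"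
      by (intro borel_measurable_times borel_measurable_const) simp
    have m2: "(\<lambda>x::real. k * x) \<in> borel_measurable borel"
      by (rule borel_measurable_continuous_onI, intro continuous_intros)
    show ?thesis unfolding scl[symmetric] distr_distr[OF m2 m1] by (simp add: comp_def mult.assoc)
  qed
  finally have kY: "distr M borel (\<lambda>\<omega>. k * Y \<omega>) = (distr M borel (\<lambda>\<omega>. (k * c) * Y \<omega>) \<star> distr Q borel (\<lambda>x. k * x))" .
  have fX: "finite_measure (distr M borel X)" by (rule prob_space.finite_measure, rule prob_space_distr) simp
  have fY: "finite_measure (distr M borel (\<lambda>\<omega>. (k * c) * Y \<omega>))" by (rule prob_space.finite_measure, rule prob_space_distr) simp
  have fQ: "finite_measure (distr Q borel (\<lambda>x. k * x))" by (rule prob_space.finite_measure[OF pQk])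
  have "distr M borel (\<lambda>\<omega>. X \<omega> + k * Y \<omega>) = (distr M borel X \<star> (distr M borel (\<lambda>\<omega>. (k * c) * Y \<omega>) \<star> distr Q borel (\<lambda>x. k * x)))"
    unfolding sumlaw kY ..
  also have "\<dots> = ((distr M borel X \<star> distr M borel (\<lambda>\<omega>. (k * c) * Y \<omega>)) \<star> distr Q borel (\<lambda>x. k * x))"
    by (rule convolution_associative[OF fY fQ fX]) simp_all
  also have "\<dots> = (distr M borel (\<lambda>\<omega>. X \<omega> + (k * c) * Y \<omega>) \<star> distr Q borel (\<lambda>x. k * x))"
    unfolding sumlaw ..
  finally show ?thesis .
qed

lemma law_props:
  fixes X Y :: "'a \<Rightarrow> real" and t :: real
  assumes M: "prob_space M" and [measurable]: "X \<in> borel_measurable M" "Y \<in> borel_measurable M"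
    and X2: "integrable M (\<lambda>\<omega>. (X \<omega>)\<^sup>2)" and Y2: "integrable M (\<lambda>\<omega>. (Y \<omega>)\<^sup>2)"
  shows "prob_space (distr M borel (\<lambda>\<omega>. X \<omega> + t * Y \<omega>))"
    "sets (distr M borel (\<lambda>\<omega>. X \<omega> + t * Y \<omega>)) = sets borel"
    "integrable (distr M borel (\<lambda>\<omega>. X \<omega> + t * Y \<omega>)) (\<lambda>x. x\<^sup>2)"
proof -
  show "prob_space (distr M borel (\<lambda>\<omega>. X \<omega> + t * Y \<omega>))"
    by (rule prob_space.prob_space_distr[OF M])
       (intro borel_measurable_add borel_measurable_times borel_measurable_const assms(2,3))
  show "sets (distr M borel (\<lambda>\<omega>. X \<omega> + t * Y \<omega>)) = sets borel" by simp
  have tY: "integrable M (\<lambda>\<omega>. (t * Y \<omega>)\<^sup>2)" using Y2 by (simp add: power_mult_distrib)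
  have "integrable M (\<lambda>\<omega>. (X \<omega> + t * Y \<omega>)\<^sup>2)" by (rule sq_int_add(1)) (use X2 tY in auto)
  then show "integrable (distr M borel (\<lambda>\<omega>. X \<omega> + t * Y \<omega>)) (\<lambda>x. x\<^sup>2)"
    by (subst integrable_distr_eq)
       (intro borel_measurable_add borel_measurable_times borel_measurable_const assms(2,3), simp_all)
qed

theorem theorem5:
  fixes M :: "'a measure" and X Y :: "'a \<Rightarrow> real" and n :: nat
  assumes "prob_space M"
    and "X \<in> borel_measurable M" and "Y \<in> borel_measurable M"
    and "prob_space.indep_var M borel X borel Y"
    and "integrable M (\<lambda>\<omega>. (X \<omega>)\<^sup>2)" and "integrable M (\<lambda>\<omega>. (Y \<omega>)\<^sup>2)"
    and "self_decomposable (distr M borel Y)"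
    and "n \<ge> 1"
  shows "(\<forall>a b. 0 < a \<longrightarrow> a \<le> b \<longrightarrow>
            pitman_var (distr M borel (\<lambda>\<omega>. X \<omega> + a * Y \<omega>)) n
              \<le> pitman_var (distr M borel (\<lambda>\<omega>. X \<omega> + b * Y \<omega>)) n) \<and>
         (\<forall>a b. a \<le> b \<longrightarrow> b < 0 \<longrightarrow>
            pitman_var (distr M borel (\<lambda>\<omega>. X \<omega> + a * Y \<omega>)) n
              \<ge> pitman_var (distr M borel (\<lambda>\<omega>. X \<omega> + b * Y \<omega>)) n)"
proof -
  note LP = law_props[OF assms(1,2,3,5,6)]
  have key: "pitman_var (distr M borel (\<lambda>\<omega>. X \<omega> + (k * c) * Y \<omega>)) n
      \<le> pitman_var (distr M borel (\<lambda>\<omega>. X \<omega> + k * Y \<omega>)) n" if c: "0 < c" "c < 1" for k c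
  proof -
    obtain Q where Q: "prob_space Q" "sets Q = sets borel"
      and G: "distr M borel Y = (distr (distr M borel Y) borel (\<lambda>y. c * y) \<star> Q)"
    proof -
      have "c \<in> {0<..<1}" using c by simp
      with assms(7) show ?thesis using that unfolding self_decomposable_def by blast
    qed
    have mQ: "(\<lambda>x::real. k * x) \<in> Q \<rightarrow>\<^sub>M borel" unfolding measurable_cong_sets[OF Q(2) refl] by simp
    have pQk: "prob_space (distr Q borel (\<lambda>x. k * x))" by (rule prob_space.prob_space_distr[OF Q(1) mQ])
    have eq: "distr M borel (\<lambda>\<omega>. X \<omega> + k * Y \<omega>) =
         (distr M borel (\<lambda>\<omega>. X \<omega> + (k * c) * Y \<omega>) \<star> distr Q borel (\<lambda>x. k * x))"
      by (rule law_decomp[OF assms(1-4) Q G])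
    show ?thesis unfolding eq
      by (rule pitman_conv_le[OF LP(1,2,3) pQk]) (use LP(3)[of k] eq in simp_all)
  qed
  show ?thesis
  proof (intro conjI allI impI)
    fix a b :: real assume ab: "0 < a" "a \<le> b"
    show "pitman_var (distr M borel (\<lambda>\<omega>. X \<omega> + a * Y \<omega>)) n
              \<le> pitman_var (distr M borel (\<lambda>\<omega>. X \<omega> + b * Y \<omega>)) n"
    proof (cases "a = b")
      case False
      then have "0 < a / b" "a / b < 1" using ab by (auto simp: field_simps)
      from key[OF this, of b] show ?thesis using ab by simp
    qed simp
  next
    fix a b :: real assume ab: "a \<le> b" "b < 0"
    show "pitman_var (distr M borel (\<lambda>\<omega>. X \<omega> + a * Y \<omega>)) n
              \<ge> pitman_var (distr M borel (\<lambda>\<omega>. X \<omega> + b * Y \<omega>)) n"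
    proof (cases "a = b")
      case False
      then have "0 < b / a" "b / a < 1" using ab by (auto simp: field_simps)
      from key[OF this, of a] show ?thesis using ab by simp
    qed simp
  qed
qed

end
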